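(* Let $A$ be an algebra, $R$ a Rota–Baxter operator of weight zero on $A$, and $e$ a nonzero idempotent of $A$. Then $e\notin \mathrm{Im}(R^k)\cap\ker R$ for every $k\ge2$.
   Context: An algebra is a vector space with a bilinear (not necessarily associative) product. A linear operator $R$ on $A$ is a Rota–Baxter operator of weight $0$ if $R(x)R(y)=R(R(x)y+xR(y))$ for all $x,y\in A$. *)

theory Defs
  imports Main "HOL.Vector_Spaces"
begin

definition bilinear_prod :: "('k::field \<Rightarrow> 'a::ab_group_add \<Rightarrow> 'a) \<Rightarrow> ('a \<Rightarrow> 'a \<Rightarrow> 'a) \<Rightarrow> bool" where
  "bilinear_prod scale mult \<longleftrightarrow>
     (\<forall>y. Vector_Spaces.linear scale scale (\<lambda>x. mult x y)) \<and>
     (\<forall>x. Vector_Spaces.linear scale scale (\<lambda>y. mult x y))"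

definition is_algebra :: "('k::field \<Rightarrow> 'a::ab_group_add \<Rightarrow> 'a) \<Rightarrow> ('a \<Rightarrow> 'a \<Rightarrow> 'a) \<Rightarrow> bool" where
  "is_algebra scale mult \<longleftrightarrow> vector_space scale \<and> bilinear_prod scale mult"

definition rota_baxter0 :: "('k::field \<Rightarrow> 'a::ab_group_add \<Rightarrow> 'a) \<Rightarrow> ('a \<Rightarrow> 'a \<Rightarrow> 'a) \<Rightarrow> ('a \<Rightarrow> 'a) \<Rightarrow> bool" where
  "rota_baxter0 scale mult R \<longleftrightarrow>
     Vector_Spaces.linear scale scale R \<and>
     (\<forall>x y. mult (R x) (R y) = R (mult (R x) y + mult x (R y)))"

end

theory Submission
  imports Defs
begin

lemma add_zero_lemma:
  fixes f :: "'a::ab_group_add \<Rightarrow> 'b::ab_group_add"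
  assumes "\<forall>x y. f (x + y) = f x + f y" shows "f 0 = 0"
proof -
  have "f (0 + 0) = f 0 + f 0" using assms by blast
  thus ?thesis by simp
qed

theorem lemma13:
  fixes scale :: "'k::field \<Rightarrow> 'a::ab_group_add \<Rightarrow> 'a"
    and mult :: "'a \<Rightarrow> 'a \<Rightarrow> 'a"
    and R :: "'a \<Rightarrow> 'a" and e :: 'a and k :: nat
  assumes "is_algebra scale mult"
    and "rota_baxter0 scale mult R"
    and "e \<noteq> 0" and "mult e e = e"
    and "k \<ge> 2"
  shows "\<not> (e \<in> range (R ^^ k) \<and> R e = 0)"
proof
  assume H: "e \<in> range (R ^^ k) \<and> R e = 0"
  have Radd: "\<forall>x y. R (x + y) = R x + R y"
    using assms(2) unfolding rota_baxter0_def linear_iff by blast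
  have RB: "\<And>x y. mult (R x) (R y) = R (mult (R x) y + mult x (R y))"
    using assms(2) unfolding rota_baxter0_def by blast
  have madd1: "\<And>y. \<forall>a b. mult (a + b) y = mult a y + mult b y"
    using assms(1) unfolding is_algebra_def bilinear_prod_def linear_iff by blast
  have madd2: "\<And>x. \<forall>a b. mult x (a + b) = mult x a + mult x b"
    using assms(1) unfolding is_algebra_def bilinear_prod_def linear_iff by blast
  have m01: "\<And>y. mult 0 y = 0"
    using add_zero_lemma[OF madd1] by blast
  have m02: "\<And>x. mult x 0 = 0"
    using add_zero_lemma[OF madd2] by blast
  have R0: "R 0 = 0" using add_zero_lemma[OF Radd] .
  have Re: "R e = 0" using H by blast
  have A: "\<And>x. R (mult e (R x)) = 0"
  proof -
    fix x
    have "mult (R e) (R x) = R (mult (R e) x + mult e (R x))" by (rule RB)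
    thus "R (mult e (R x)) = 0" using Re m01 by simp
  qed
  have B: "\<And>x. R (mult (R x) e) = 0"
  proof -
    fix x
    have "mult (R x) (R e) = R (mult (R x) e + mult x (R e))" by (rule RB)
    thus "R (mult (R x) e) = 0" using Re m02 by simp
  qed
  obtain j where kj: "k = Suc (Suc j)" using assms(5) by (metis add_2_eq_Suc le_Suc_ex)
  obtain a where "e = (R ^^ k) a" using H by blast
  hence eq: "e = R (R ((R ^^ j) a))" using kj by simp
  define w where "w = (R ^^ j) a"
  define u where "u = R w"
  have eu: "e = R u" using eq u_def w_def by simp
  have "e = mult (R u) (R u)" using assms(4) eu by simp
  also have "\<dots> = R (mult e u + mult u e)" using RB eu by simp
  also have "\<dots> = R (mult e (R w)) + R (mult (R w) e)" using Radd u_def by simp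
  also have "\<dots> = 0" using A B by simp
  finally show False using assms(3) by simp
qed

end
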